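(* Let $\mathscr{S}\subseteq\mathbb{R}$. For each $s\in\mathscr{S}$ let $\{\mathcal{V}(s,t),\ t\in\mathbb{R}^+\}$ be a real-valued stochastic process. Let $\{X_t,\ t\in\mathbb{R}^+\}$ be a real-valued stochastic process with $X_0=0$. For each $s\in\mathscr{S}$ let $\{\mathcal{Z}(s,t),\ t\in\mathbb{R}^+\}$ be a right-continuous supermartingale adapted to the natural filtration generated by $\{\mathcal{V}(s,t),\ t\in\mathbb{R}^+\}$ and $\{X_t,\ t\in\mathbb{R}^+\}$, such that for all $s\in\mathscr{S}$, \[ \mathbb{E}[\mathcal{Z}(s,0)]\le 1\quad\text{and}\quad \exp(sX_t-\mathcal{V}(s,t))\le\mathcal{Z}(s,t)\ \text{ almost surely for all } t\in\mathbb{R}^+. \] Let $\gamma\in\mathbb{R}$ and let $g$ be a real-valued function on $\mathscr{S}$. Then \[ \Pr\Big\{\sup_{t>0}\big[s(X_t-\gamma)-\mathcal{V}(s,t)+g(s)\big]\ge 0\Big\}\le\exp(g(s)-\gamma s)\quad\text{for all } s\in\mathscr{S}. \] In particular: (I) If the infimum of $g(s)-\gamma s$ over $s\in\mathscr{S}$ is attained at $\zeta\in\mathscr{S}$, then $\Pr\{\sup_{t>0}[\zeta(X_t-\gamma)-\mathcal{V}(\zeta,t)+g(\zeta)]\ge0\}\le\exp(g(\zeta)-\gamma\zeta)$. (II) If $\mathcal{V}(s,t)$ is a deterministic function of $s\in\mathscr{S}$ and $t\in\mathbb{R}^+$, then $\Pr\{\sup_{t>0}[s(X_t-\gamma)-\mathcal{V}(s,t)+\mathcal{V}(s,\tau)]\ge0\}\le\exp(\mathcal{V}(s,\tau)-\gamma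 s)$ for all $s\in\mathscr{S}$ and $\tau\in\mathbb{R}^+$. (III) If $\mathcal{V}(s,t)=\varphi(s)V_t+\ln C$, where $C>0$ is a constant, $\varphi$ is a deterministic function on $\mathscr{S}$, and $\{V_t,\ t\in\mathbb{R}^+\}$ is a deterministic or stochastic process, then $\Pr\{\sup_{t>0}[s(X_t-\gamma)-\varphi(s)(V_t-m)]\ge0\}\le C\exp(m\varphi(s)-\gamma s)$ for all $s\in\mathscr{S}$ and $m\in\mathbb{R}$.
   Context: $\mathbb{R}^+$ denotes the set of nonnegative real numbers. *)

theory Defs
  imports "HOL-Probability.Probability"
begin

definition natural_filtration ::
  "'a measure \<Rightarrow> (real \<Rightarrow> ('a \<Rightarrow> real) set) \<Rightarrow> real \<Rightarrow> 'a measure" where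
  "natural_filtration M Y t =
     sigma (space M) {f -` B \<inter> space M | f B u. 0 \<le> u \<and> u \<le> t \<and> f \<in> Y u \<and> B \<in> sets borel}"

definition supermartingale ::
  "'a measure \<Rightarrow> (real \<Rightarrow> 'a measure) \<Rightarrow> (real \<Rightarrow> 'a \<Rightarrow> real) \<Rightarrow> bool" where
  "supermartingale M F Z \<longleftrightarrow>
     (\<forall>t\<ge>0. subalgebra M (F t)) \<and>
     (\<forall>u t. 0 \<le> u \<longrightarrow> u \<le> t \<longrightarrow> sets (F u) \<subseteq> sets (F t)) \<and>
     (\<forall>t\<ge>0. Z t \<in> borel_measurable (F t) \<and> integrable M (Z t)) \<and>
     (\<forall>u t. 0 \<le> u \<longrightarrow> u \<le> t \<longrightarrow>
        (AE \<omega> in M. real_cond_exp M (F u) (Z t) \<omega> \<le> Z u \<omega>))"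

text \<open>Outer probability bound: the (possibly non-measurable) event E is contained in a
measurable event of probability at most b.\<close>
definition outer_prob_le :: "'a measure \<Rightarrow> 'a set \<Rightarrow> real \<Rightarrow> bool" where
  "outer_prob_le M E b \<longleftrightarrow> (\<exists>A\<in>sets M. E \<subseteq> A \<and> measure M A \<le> b)"

end

theory Submission
  imports Defs
begin

lemma si: "A \<in> sets M \<Longrightarrow> integrable M f \<Longrightarrow> set_integrable M A (f::_\<Rightarrow>real)"
  unfolding set_integrable_def by (rule integrable_mult_indicator)

lemma super_setint:
  assumes P: "prob_space M" and sub: "subalgebra M Fu"
    and B: "B \<in> sets Fu" and it: "integrable M Zt" and iu: "integrable M Zu"
    and ae: "AE \<omega> in M. real_cond_exp M Fu Zt \<omega> \<le> Zu \<omega>"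
  shows "(\<integral>\<omega>\<in>B. Zt \<omega> \<partial>M) \<le> (\<integral>\<omega>\<in>B. Zu \<omega> \<partial>M)"
proof -
  interpret prob_space M by (rule P)
  interpret finite_measure_subalgebra M Fu by unfold_locales (rule sub)
  have BM: "B \<in> sets M" using B sub by (meson subalgebra_def subsetD)
  have "(\<integral>\<omega>\<in>B. Zt \<omega> \<partial>M) = (\<integral>\<omega>\<in>B. real_cond_exp M Fu Zt \<omega> \<partial>M)"
    using real_cond_exp_intA[OF it B] .
  also have "\<dots> \<le> (\<integral>\<omega>\<in>B. Zu \<omega> \<partial>M)"
    apply (rule set_integral_mono_AE)
    using real_cond_exp_int(1)[OF it] iu BM ae
    by (auto intro!: si)
  finally show ?thesis .
qed

lemma ville_finite:
  fixes Z :: "real \<Rightarrow> 'a \<Rightarrow> real"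
  assumes P: "prob_space M"
   and sub: "\<forall>t\<ge>0. subalgebra M (F t)"
   and mono: "\<forall>u t. 0 \<le> u \<longrightarrow> u \<le> t \<longrightarrow> sets (F u) \<subseteq> sets (F t)"
   and meas: "\<forall>t\<ge>0. Z t \<in> borel_measurable (F t) \<and> integrable M (Z t)"
   and sup: "\<forall>u t. 0 \<le> u \<longrightarrow> u \<le> t \<longrightarrow> (AE \<omega> in M. real_cond_exp M (F u) (Z t) \<omega> \<le> Z u \<omega>)"
   and nn: "AE \<omega> in M. \<forall>t\<ge>0. 0 \<le> Z t \<omega>"
   and c: "c \<ge> 0"
   and fin: "finite T"
  shows "\<forall>u B. 0 \<le> u \<longrightarrow> T \<subseteq> {u..} \<longrightarrow> B \<in> sets (F u) \<longrightarrow>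
     c * measure M (B \<inter> {\<omega>\<in>space M. \<exists>t\<in>T. c < Z t \<omega>}) \<le> (\<integral>\<omega>\<in>B. Z u \<omega> \<partial>M)"
  using fin
proof (induction T rule: finite_linorder_min_induct)
  case empty
  show ?case
  proof (intro allI impI)
    fix u B assume u: "0 \<le> u" and B: "B \<in> sets (F u)"
    have "0 \<le> (\<integral>\<omega>\<in>B. Z u \<omega> \<partial>M)"
      unfolding set_lebesgue_integral_def
      apply (rule integral_nonneg_AE) using nn u by (auto simp: indicator_def)
    then show "c * measure M (B \<inter> {\<omega>\<in>space M. \<exists>t\<in>{}. c < Z t \<omega>}) \<le> (\<integral>\<omega>\<in>B. Z u \<omega> \<partial>M)"
      by simp
  qed
next
  case (insert b A)
  interpret prob_space M by (rule P)
  show ?case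
  proof (intro allI impI)
    fix u B assume u: "0 \<le> u" and T: "insert b A \<subseteq> {u..}" and B: "B \<in> sets (F u)"
    have bu: "u \<le> b" using T by auto
    have b0: "0 \<le> b" using u bu by auto
    have subb: "subalgebra M (F b)" using sub b0 by auto
    have Bb: "B \<in> sets (F b)" using mono u bu B by blast
    have BM: "B \<in> sets M" using Bb subb by (meson subalgebra_def subsetD)
    have Zb: "Z b \<in> borel_measurable (F b)" "integrable M (Z b)" using meas b0 by auto
    have Zu: "integrable M (Z u)" using meas u by auto
    have spb: "space (F b) = space M" using subb by (simp add: subalgebra_def)
    define B1 where "B1 = B \<inter> {\<omega>\<in>space M. c < Z b \<omega>}"
    define B2 where "B2 = B \<inter> {\<omega>\<in>space M. Z b \<omega> \<le> c}"
    have "{\<omega>\<in>space (F b). c < Z b \<omega>} \<in> sets (F b)" using Zb(1) by measurable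
    then have B1F: "B1 \<in> sets (F b)" unfolding B1_def using Bb spb by auto
    have "{\<omega>\<in>space (F b). Z b \<omega> \<le> c} \<in> sets (F b)" using Zb(1) by measurable
    then have B2F: "B2 \<in> sets (F b)" unfolding B2_def using Bb spb by auto
    have B1M: "B1 \<in> sets M" using B1F subb by (meson subalgebra_def subsetD)
    have B2M: "B2 \<in> sets M" using B2F subb by (meson subalgebra_def subsetD)
    define EA where "EA = {\<omega>\<in>space M. \<exists>t\<in>A. c < Z t \<omega>}"
    have A0: "A \<subseteq> {0..}" using T u by auto
    have "EA = (\<Union>t\<in>A. {\<omega>\<in>space M. c < Z t \<omega>})" unfolding EA_def by auto
    moreover have "\<And>t. t \<in> A \<Longrightarrow> {\<omega>\<in>space M. c < Z t \<omega>} \<in> sets M"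
    proof -
      fix t assume "t \<in> A"
      then have t0: "0 \<le> t" using A0 by auto
      have "Z t \<in> borel_measurable M"
        using measurable_from_subalg[of M "F t" "Z t" borel] sub meas t0 by auto
      then show "{\<omega>\<in>space M. c < Z t \<omega>} \<in> sets M" by measurable
    qed
    ultimately have EAM: "EA \<in> sets M" using insert.hyps(1) by auto
    have sub1: "B \<inter> {\<omega>\<in>space M. \<exists>t\<in>insert b A. c < Z t \<omega>} \<subseteq> B1 \<union> (B2 \<inter> EA)"
      by (auto simp: B1_def B2_def EA_def)
    have "measure M (B \<inter> {\<omega>\<in>space M. \<exists>t\<in>insert b A. c < Z t \<omega>}) \<le> measure M (B1 \<union> (B2 \<inter> EA))"
      by (rule finite_measure_mono[OF sub1]) (use B1M B2M EAM in auto)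
    also have "\<dots> \<le> measure M B1 + measure M (B2 \<inter> EA)"
      by (rule measure_subadditive) (use B1M B2M EAM in auto)
    finally have m1: "c * measure M (B \<inter> {\<omega>\<in>space M. \<exists>t\<in>insert b A. c < Z t \<omega>})
       \<le> c * (measure M B1 + measure M (B2 \<inter> EA))"
      by (rule mult_left_mono[OF _ c])
    have "c * measure M B1 = (\<integral>\<omega>\<in>B1. c \<partial>M)"
      using set_integral_const[OF B1M, of c] by simp
    also have "\<dots> \<le> (\<integral>\<omega>\<in>B1. Z b \<omega> \<partial>M)"
      by (rule set_integral_mono) (auto intro!: si B1M Zb(2) simp: B1_def[symmetric], auto simp: B1_def)
    finally have m2: "c * measure M B1 \<le> (\<integral>\<omega>\<in>B1. Z b \<omega> \<partial>M)" .
    have Ab: "A \<subseteq> {b..}" using insert.hyps(2) by auto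
    have m3: "c * measure M (B2 \<inter> EA) \<le> (\<integral>\<omega>\<in>B2. Z b \<omega> \<partial>M)"
      using insert.IH[rule_format, OF b0 Ab B2F] unfolding EA_def .
    have "B = B1 \<union> B2" using BM sets.sets_into_space[OF BM] by (auto simp: B1_def B2_def)
    then have BU: "(\<integral>\<omega>\<in>B. Z b \<omega> \<partial>M) = (\<integral>\<omega>\<in>B1 \<union> B2. Z b \<omega> \<partial>M)" by simp
    have "(\<integral>\<omega>\<in>B1 \<union> B2. Z b \<omega> \<partial>M) = (\<integral>\<omega>\<in>B1. Z b \<omega> \<partial>M) + (\<integral>\<omega>\<in>B2. Z b \<omega> \<partial>M)"
      by (rule set_integral_Un[OF _ si[OF B1M Zb(2)] si[OF B2M Zb(2)]]) (auto simp: B1_def B2_def)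
    then have "(\<integral>\<omega>\<in>B. Z b \<omega> \<partial>M) = (\<integral>\<omega>\<in>B1. Z b \<omega> \<partial>M) + (\<integral>\<omega>\<in>B2. Z b \<omega> \<partial>M)"
      using BU by simp
    also have "(\<integral>\<omega>\<in>B. Z b \<omega> \<partial>M) \<le> (\<integral>\<omega>\<in>B. Z u \<omega> \<partial>M)"
      by (rule super_setint[OF P _ B Zb(2) Zu]) (use sub u sup bu in auto)
    ultimately show "c * measure M (B \<inter> {\<omega>\<in>space M. \<exists>t\<in>insert b A. c < Z t \<omega>}) \<le> (\<integral>\<omega>\<in>B. Z u \<omega> \<partial>M)"
      using m1 m2 m3 by (simp add: distrib_left)
  qed
qed

lemma meas_ex:
  fixes f :: "real \<Rightarrow> 'a \<Rightarrow> real"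
  assumes "countable T" "\<forall>t\<in>T. f t \<in> borel_measurable M"
  shows "{\<omega>\<in>space M. \<exists>t\<in>T. a < f t \<omega>} \<in> sets M"
proof -
  have "{\<omega>\<in>space M. \<exists>t\<in>T. a < f t \<omega>} = (\<Union>t\<in>T. {\<omega>\<in>space M. a < f t \<omega>})" by auto
  moreover have "\<And>t. t \<in> T \<Longrightarrow> {\<omega>\<in>space M. a < f t \<omega>} \<in> sets M"
  proof -
    fix t assume "t \<in> T"
    then have "f t \<in> borel_measurable M" using assms(2) by auto
    then show "{\<omega>\<in>space M. a < f t \<omega>} \<in> sets M" by measurable
  qed
  ultimately show ?thesis using sets.countable_UN''[OF assms(1), of "\<lambda>t. {\<omega>\<in>space M. a < f t \<omega>}"] by simp
qed

lemma main_bound: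
  fixes Zs Vs :: "real \<Rightarrow> 'a \<Rightarrow> real" and X :: "real \<Rightarrow> 'a \<Rightarrow> real"
  assumes P: "prob_space M"
    and sm: "supermartingale M F Zs"
    and rc: "\<forall>\<omega>\<in>space M. \<forall>t\<ge>0. continuous (at_right t) (\<lambda>u. Zs u \<omega>)"
    and Z0: "(\<integral>\<omega>. Zs 0 \<omega> \<partial>M) \<le> 1"
    and dom: "AE \<omega> in M. \<forall>t\<ge>0. exp (s * X t \<omega> - Vs t \<omega>) \<le> Zs t \<omega>"
  shows "outer_prob_le M
        {\<omega>\<in>space M. (SUP t\<in>{0<..}. ereal (s * (X t \<omega> - \<gamma>) - Vs t \<omega> + h)) \<ge> 0}
        (exp (h - \<gamma> * s))"
proof -
  interpret prob_space M by (rule P)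
  have sub: "\<forall>t\<ge>0. subalgebra M (F t)"
   and mono: "\<forall>u t. 0 \<le> u \<longrightarrow> u \<le> t \<longrightarrow> sets (F u) \<subseteq> sets (F t)"
   and meas: "\<forall>t\<ge>0. Zs t \<in> borel_measurable (F t) \<and> integrable M (Zs t)"
   and sup: "\<forall>u t. 0 \<le> u \<longrightarrow> u \<le> t \<longrightarrow> (AE \<omega> in M. real_cond_exp M (F u) (Zs t) \<omega> \<le> Zs u \<omega>)"
    using sm unfolding supermartingale_def by auto
  have nn: "AE \<omega> in M. \<forall>t\<ge>0. 0 \<le> Zs t \<omega>"
    using dom by eventually_elim (meson exp_ge_zero order_trans)
  have ZM: "Zs t \<in> borel_measurable M" if "0 \<le> t" for t
    using measurable_from_subalg[of M "F t" "Zs t" borel] sub meas that by auto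
  define D where "D = {q::real. q \<in> \<rat> \<and> 0 < q}"
  have cD: "countable D" unfolding D_def
    by (rule countable_subset[OF _ countable_rat]) auto
  have neD: "D \<noteq> {}" unfolding D_def by (auto intro!: exI[of _ 1])
  define d where "d = from_nat_into D"
  have rd: "range d = D" unfolding d_def using neD cD by simp
  have D0: "D \<subseteq> {0..}" unfolding D_def by auto
  define E where "E a = {\<omega>\<in>space M. \<exists>q\<in>D. a < Zs q \<omega>}" for a
  have EM: "E a \<in> sets M" for a
    unfolding E_def by (rule meas_ex[OF cD]) (use ZM D0 in auto)
  have ville: "a * measure M (E a) \<le> 1" if a: "0 < a" for a
  proof -
    define G where "G n = {\<omega>\<in>space M. \<exists>t\<in>d ` {..n}. a < Zs t \<omega>}" for n
    have GM: "G n \<in> sets M" for n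
      unfolding G_def by (rule meas_ex) (use ZM D0 rd in auto)
    have inc: "incseq G" unfolding incseq_def G_def by auto
    have "(\<Union>n. G n) = E a"
    proof (intro equalityI subsetI)
      fix \<omega> assume "\<omega> \<in> (\<Union>n. G n)"
      then show "\<omega> \<in> E a" unfolding G_def E_def using rd by blast
    next
      fix \<omega> assume "\<omega> \<in> E a"
      then obtain q where q: "\<omega> \<in> space M" "q \<in> D" "a < Zs q \<omega>" unfolding E_def by blast
      then obtain n where "q = d n" using rd by (metis rangeE)
      then show "\<omega> \<in> (\<Union>n. G n)" unfolding G_def using q by blast
    qed
    then have lim: "(\<lambda>n. measure M (G n)) \<longlonglongrightarrow> measure M (E a)"
      using finite_Lim_measure_incseq[of G] GM inc by auto
    have sp0: "space M \<in> sets (F 0)"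
      using sub by (metis order_refl sets.top subalgebra_def)
    have bnd: "a * measure M (G n) \<le> 1" for n
    proof -
      have "a * measure M (space M \<inter> {\<omega>\<in>space M. \<exists>t\<in>d ` {..n}. a < Zs t \<omega>}) \<le> (\<integral>\<omega>\<in>space M. Zs 0 \<omega> \<partial>M)"
        using ville_finite[OF P sub mono meas sup nn, of a "d ` {..n}", rule_format, of 0 "space M"] a sp0 rd D0
        by (metis finite_atMost finite_imageI image_subsetI less_imp_le order_refl rangeI subset_iff)
      also have "\<dots> = (\<integral>\<omega>. Zs 0 \<omega> \<partial>M)" using set_integral_space meas by auto
      finally have "a * measure M (space M \<inter> G n) \<le> 1" using Z0 unfolding G_def by linarith
      moreover have "space M \<inter> G n = G n" unfolding G_def by blast
      ultimately show ?thesis by simp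
    qed
    show ?thesis
      by (rule LIMSEQ_le_const2[OF tendsto_mult_left[OF lim]]) (use bnd in auto)
  qed
  obtain N where N: "\<And>\<omega>. \<omega> \<in> space M - N \<Longrightarrow> \<forall>t\<ge>0. exp (s * X t \<omega> - Vs t \<omega>) \<le> Zs t \<omega>"
    and Nn: "N \<in> null_sets M" using AE_E3[OF dom] by blast
  define a where "a n = exp (s * \<gamma> - h - inverse (real (Suc n)))" for n
  define A where "A = N \<union> (\<Inter>n. E (a n))"
  have AM: "A \<in> sets M" unfolding A_def using Nn EM by auto
  have incl: "{\<omega>\<in>space M. (SUP t\<in>{0<..}. ereal (s * (X t \<omega> - \<gamma>) - Vs t \<omega> + h)) \<ge> 0} \<subseteq> A"
  proof
    fix \<omega> assume w: "\<omega> \<in> {\<omega>\<in>space M. (SUP t\<in>{0<..}. ereal (s * (X t \<omega> - \<gamma>) - Vs t \<omega> + h)) \<ge> 0}"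
    show "\<omega> \<in> A"
    proof (cases "\<omega> \<in> N")
      case True then show ?thesis unfolding A_def by auto
    next
      case False
      have wM: "\<omega> \<in> space M" using w by auto
      have dm: "\<forall>t\<ge>0. exp (s * X t \<omega> - Vs t \<omega>) \<le> Zs t \<omega>" using N False wM by auto
      have "\<omega> \<in> E (a n)" for n
      proof -
        define \<delta> where "\<delta> = inverse (real (Suc n))"
        have \<delta>: "0 < \<delta>" unfolding \<delta>_def by auto
        have "\<exists>t\<in>{0<..}. - \<delta> < s * (X t \<omega> - \<gamma>) - Vs t \<omega> + h"
        proof (rule ccontr)
          assume "\<not> ?thesis"
          then have "(SUP t\<in>{0<..}. ereal (s * (X t \<omega> - \<gamma>) - Vs t \<omega> + h)) \<le> ereal (- \<delta>)"
            by (intro SUP_least) (simp add: not_less)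
          moreover have "0 \<le> (SUP t\<in>{0<..}. ereal (s * (X t \<omega> - \<gamma>) - Vs t \<omega> + h))" using w by simp
          ultimately have "0 \<le> ereal (- \<delta>)" by (rule order_trans[rotated])
          then show False using \<delta> by simp
        qed
        then obtain t where t: "0 < t" "- \<delta> < s * (X t \<omega> - \<gamma>) - Vs t \<omega> + h" by auto
        have "a n < exp (s * X t \<omega> - Vs t \<omega>)"
          unfolding a_def \<delta>_def[symmetric] using t(2) by (simp add: algebra_simps)
        also have "\<dots> \<le> Zs t \<omega>" using dm t(1) by auto
        finally have lt: "a n < Zs t \<omega>" .
        have "((\<lambda>u. Zs u \<omega>) \<longlongrightarrow> Zs t \<omega>) (at_right t)"
          using rc wM t(1) by (auto simp: continuous_within)
        then have "eventually (\<lambda>u. a n < Zs u \<omega>) (at_right t)"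
          using lt by (rule order_tendstoD)
        then obtain b where b: "b > t" "\<And>y. y > t \<Longrightarrow> y < b \<Longrightarrow> a n < Zs y \<omega>"
          unfolding eventually_at_right[OF less_add_one[of t]] by auto
        obtain q where q: "q \<in> \<rat>" "t < q" "q < b" using Rats_dense_in_real[OF b(1)] by auto
        have "q \<in> D" unfolding D_def using q t(1) by auto
        then show ?thesis unfolding E_def using wM b(2)[OF q(2,3)] by auto
      qed
      then show ?thesis unfolding A_def by auto
    qed
  qed
  have apos: "0 < a n" for n unfolding a_def by simp
  have mA: "measure M A \<le> exp (h - \<gamma> * s + inverse (real (Suc n)))" for n
  proof -
    have "measure M A \<le> measure M N + measure M (E (a n))"
      unfolding A_def
      by (rule order_trans[OF finite_measure_mono measure_subadditive]) (use Nn EM in auto)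
    also have "\<dots> = measure M (E (a n))" using Nn by (simp add: measure_eq_0_null_sets)
    also have "\<dots> \<le> 1 / a n" using ville[OF apos] apos by (simp add: pos_le_divide_eq mult.commute)
    also have "\<dots> = exp (- (s * \<gamma> - h - inverse (real (Suc n))))"
      unfolding a_def by (simp only: exp_minus divide_inverse mult_1)
    also have "- (s * \<gamma> - h - inverse (real (Suc n))) = h - \<gamma> * s + inverse (real (Suc n))"
      by (simp add: algebra_simps)
    finally show ?thesis .
  qed
  have "(\<lambda>n. exp (h - \<gamma> * s + inverse (real (Suc n)))) \<longlonglongrightarrow> exp (h - \<gamma> * s + 0)"
    by (intro tendsto_intros LIMSEQ_inverse_real_of_nat)
  then have "measure M A \<le> exp (h - \<gamma> * s)"
    by (intro LIMSEQ_le_const[where X="\<lambda>n. exp (h - \<gamma> * s + inverse (real (Suc n)))"]) (use mA in auto)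
  then show ?thesis unfolding outer_prob_le_def using AM incl by blast
qed

theorem theorem10:
  fixes M :: "'a measure"
    and S :: "real set"
    and V :: "real \<Rightarrow> real \<Rightarrow> 'a \<Rightarrow> real"
    and X :: "real \<Rightarrow> 'a \<Rightarrow> real"
    and Z :: "real \<Rightarrow> real \<Rightarrow> 'a \<Rightarrow> real"
    and \<gamma> :: real
    and g :: "real \<Rightarrow> real"
  assumes "prob_space M"
    and V_rv: "\<forall>s\<in>S. \<forall>t\<ge>0. V s t \<in> borel_measurable M"
    and X_rv: "\<forall>t\<ge>0. X t \<in> borel_measurable M"
    and X0: "AE \<omega> in M. X 0 \<omega> = 0"
    and Z_super: "\<forall>s\<in>S. supermartingale M
                     (natural_filtration M (\<lambda>u. {V s u, X u})) (Z s)"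
    and Z_rcont: "\<forall>s\<in>S. \<forall>\<omega>\<in>space M. \<forall>t\<ge>0.
                     continuous (at_right t) (\<lambda>u. Z s u \<omega>)"
    and Z0: "\<forall>s\<in>S. (\<integral>\<omega>. Z s 0 \<omega> \<partial>M) \<le> 1"
    and Z_dom: "\<forall>s\<in>S. AE \<omega> in M. \<forall>t\<ge>0. exp (s * X t \<omega> - V s t \<omega>) \<le> Z s t \<omega>"
  shows
    "(\<forall>s\<in>S. outer_prob_le M
        {\<omega>\<in>space M. (SUP t\<in>{0<..}. ereal (s * (X t \<omega> - \<gamma>) - V s t \<omega> + g s)) \<ge> 0}
        (exp (g s - \<gamma> * s)))
     \<and>
     (\<forall>\<zeta>. \<zeta> \<in> S \<longrightarrow> (\<forall>s\<in>S. g \<zeta> - \<gamma> * \<zeta> \<le> g s - \<gamma> * s) \<longrightarrow>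
        outer_prob_le M
          {\<omega>\<in>space M. (SUP t\<in>{0<..}. ereal (\<zeta> * (X t \<omega> - \<gamma>) - V \<zeta> t \<omega> + g \<zeta>)) \<ge> 0}
          (exp (g \<zeta> - \<gamma> * \<zeta>)))
     \<and>
     ((\<exists>v :: real \<Rightarrow> real \<Rightarrow> real. \<forall>s\<in>S. \<forall>t\<ge>0. \<forall>\<omega>\<in>space M. V s t \<omega> = v s t) \<longrightarrow>
        (\<forall>s\<in>S. \<forall>\<tau>\<ge>0. \<forall>\<omega>0\<in>space M. outer_prob_le M
          {\<omega>\<in>space M. (SUP t\<in>{0<..}.
              ereal (s * (X t \<omega> - \<gamma>) - V s t \<omega> + V s \<tau> \<omega>0)) \<ge> 0}
          (exp (V s \<tau> \<omega>0 - \<gamma> * s))))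
     \<and>
     (\<forall>(\<phi> :: real \<Rightarrow> real) (W :: real \<Rightarrow> 'a \<Rightarrow> real) (C :: real).
        C > 0 \<longrightarrow>
        (\<forall>s\<in>S. \<forall>t\<ge>0. \<forall>\<omega>\<in>space M. V s t \<omega> = \<phi> s * W t \<omega> + ln C) \<longrightarrow>
        (\<forall>s\<in>S. \<forall>m::real. outer_prob_le M
          {\<omega>\<in>space M. (SUP t\<in>{0<..}.
              ereal (s * (X t \<omega> - \<gamma>) - \<phi> s * (W t \<omega> - m))) \<ge> 0}
          (C * exp (m * \<phi> s - \<gamma> * s))))"
  proof -
  have key: "outer_prob_le M
        {\<omega>\<in>space M. (SUP t\<in>{0<..}. ereal (s * (X t \<omega> - \<gamma>) - V s t \<omega> + h)) \<ge> 0}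
        (exp (h - \<gamma> * s))" if s: "s \<in> S" for s h
  proof -
    have a1: "supermartingale M (natural_filtration M (\<lambda>u. {V s u, X u})) (Z s)"
      using Z_super s by blast
    have a2: "\<forall>\<omega>\<in>space M. \<forall>t\<ge>0. continuous (at_right t) (\<lambda>u. Z s u \<omega>)"
      using Z_rcont s by blast
    have a3: "(\<integral>\<omega>. Z s 0 \<omega> \<partial>M) \<le> 1" using Z0 s by blast
    have a4: "AE \<omega> in M. \<forall>t\<ge>0. exp (s * X t \<omega> - V s t \<omega>) \<le> Z s t \<omega>"
      using Z_dom s by blast
    show ?thesis by (rule main_bound[OF assms(1) a1 a2 a3 a4])
  qed
  have p4: "outer_prob_le M
          {\<omega>\<in>space M. (SUP t\<in>{0<..}.
              ereal (s * (X t \<omega> - \<gamma>) - \<phi> s * (W t \<omega> - m))) \<ge> 0}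
          (C * exp (m * \<phi> s - \<gamma> * s))"
    if C: "C > 0" and VW: "\<forall>s\<in>S. \<forall>t\<ge>0. \<forall>\<omega>\<in>space M. V s t \<omega> = \<phi> s * W t \<omega> + ln C"
      and s: "s \<in> S" for \<phi> W C s m
  proof -
    have "{\<omega>\<in>space M. (SUP t\<in>{0<..}. ereal (s * (X t \<omega> - \<gamma>) - \<phi> s * (W t \<omega> - m))) \<ge> 0}
        = {\<omega>\<in>space M. (SUP t\<in>{0<..}. ereal (s * (X t \<omega> - \<gamma>) - V s t \<omega> + (ln C + m * \<phi> s))) \<ge> 0}"
    proof (intro Collect_cong conj_cong refl arg_cong2[where f="(\<le>)"] SUP_cong)
      fix \<omega> t assume "\<omega> \<in> space M" "t \<in> {0::real<..}"
      then show "ereal (s * (X t \<omega> - \<gamma>) - \<phi> s * (W t \<omega> - m)) = ereal (s * (X t \<omega> - \<gamma>) - V s t \<omega> + (ln C + m * \<phi> s))"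
        using VW s by (simp add: algebra_simps)
    qed
    moreover have "exp (ln C + m * \<phi> s - \<gamma> * s) = C * exp (m * \<phi> s - \<gamma> * s)"
      using C by (metis exp_add exp_ln add_diff_eq)
    ultimately show ?thesis using key[OF s, of "ln C + m * \<phi> s"] by simp
  qed
  show ?thesis
  proof (intro conjI)
    show "\<forall>s\<in>S. outer_prob_le M
        {\<omega>\<in>space M. (SUP t\<in>{0<..}. ereal (s * (X t \<omega> - \<gamma>) - V s t \<omega> + g s)) \<ge> 0}
        (exp (g s - \<gamma> * s))" using key by simp
  next
    show "\<forall>\<zeta>. \<zeta> \<in> S \<longrightarrow> (\<forall>s\<in>S. g \<zeta> - \<gamma> * \<zeta> \<le> g s - \<gamma> * s) \<longrightarrow>
        outer_prob_le M
          {\<omega>\<in>space M. (SUP t\<in>{0<..}. ereal (\<zeta> * (X t \<omega> - \<gamma>) - V \<zeta> t \<omega> + g \<zeta>)) \<ge> 0}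
          (exp (g \<zeta> - \<gamma> * \<zeta>))" using key by simp
  next
    show "(\<exists>v :: real \<Rightarrow> real \<Rightarrow> real. \<forall>s\<in>S. \<forall>t\<ge>0. \<forall>\<omega>\<in>space M. V s t \<omega> = v s t) \<longrightarrow>
        (\<forall>s\<in>S. \<forall>\<tau>\<ge>0. \<forall>\<omega>0\<in>space M. outer_prob_le M
          {\<omega>\<in>space M. (SUP t\<in>{0<..}.
              ereal (s * (X t \<omega> - \<gamma>) - V s t \<omega> + V s \<tau> \<omega>0)) \<ge> 0}
          (exp (V s \<tau> \<omega>0 - \<gamma> * s)))" using key by simp
  next
    show "\<forall>(\<phi> :: real \<Rightarrow> real) (W :: real \<Rightarrow> 'a \<Rightarrow> real) (C :: real).
        C > 0 \<longrightarrow>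
        (\<forall>s\<in>S. \<forall>t\<ge>0. \<forall>\<omega>\<in>space M. V s t \<omega> = \<phi> s * W t \<omega> + ln C) \<longrightarrow>
        (\<forall>s\<in>S. \<forall>m::real. outer_prob_le M
          {\<omega>\<in>space M. (SUP t\<in>{0<..}.
              ereal (s * (X t \<omega> - \<gamma>) - \<phi> s * (W t \<omega> - m))) \<ge> 0}
          (C * exp (m * \<phi> s - \<gamma> * s)))"
      using p4 by blast
  qed
qed

end
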